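(* Let $X=(x_{ij})_{2\le i,j\le n}$ be indeterminates and $I\subset\mathbb R[X]$ the ideal generated by all $x_{ij}-x_{ji}$ and all $x_{ij}x_{kl}+x_{ik}x_{jl}+x_{il}x_{jk}$ ($2\le i,j,k,l\le n$). Then modulo $I$: (i) $x_{aa}x_{ab}=0$ and $x_{ab_1}x_{ab_2}x_{ab_3}=0$ for all $a,b,b_1,b_2,b_3\in\{2,\dots,n\}$; (ii) $\det(x_{ij})_{2\le i,j\le n}=\frac{n!}{2^{n-1}}\,x_{22}x_{33}\cdots x_{nn}$; (iii) for all $i,j\ge0$, $E_i(x_{22},\dots,x_{nn})\,E_j(x_{22},\dots,x_{nn})=\binom{i+j}{i}E_{i+j}(x_{22},\dots,x_{nn})$, where $E_i$ denotes the $i$-th elementary symmetric polynomial. *)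

theory Defs
  imports Complex_Main "HOL-Library.Poly_Mapping" "HOL-Combinatorics.Permutations"
begin

text \<open>Real polynomials in the indeterminates x_(i,j), (i,j) :: nat \<times> nat,
  represented as finitely supported maps from monomials (finitely supported
  exponent vectors) to real coefficients.\<close>
type_synonym rpoly = "((nat \<times> nat) \<Rightarrow>\<^sub>0 nat) \<Rightarrow>\<^sub>0 real"

definition X :: "nat \<Rightarrow> nat \<Rightarrow> rpoly" where
  "X i j = Poly_Mapping.single (Poly_Mapping.single (i, j) 1) 1"

definition C :: "real \<Rightarrow> rpoly" where
  "C c = Poly_Mapping.single 0 c"

definition ideal_gen :: "rpoly set \<Rightarrow> rpoly set" where
  "ideal_gen S = {p. \<exists>F c. finite F \<and> F \<subseteq> S \<and> p = (\<Sum>g\<in>F. c g * g)}"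

definition gens :: "nat \<Rightarrow> rpoly set" where
  "gens n = {X i j - X j i | i j. i \<in> {2..n} \<and> j \<in> {2..n}}
          \<union> {X i j * X k l + X i k * X j l + X i l * X j k | i j k l.
               i \<in> {2..n} \<and> j \<in> {2..n} \<and> k \<in> {2..n} \<and> l \<in> {2..n}}"

definition I :: "nat \<Rightarrow> rpoly set" where
  "I n = ideal_gen (gens n)"

definition cong_mod :: "rpoly \<Rightarrow> rpoly \<Rightarrow> rpoly set \<Rightarrow> bool" where
  "cong_mod p q J \<longleftrightarrow> p - q \<in> J"

definition detX :: "nat \<Rightarrow> rpoly" where
  "detX n = (\<Sum>p | p permutes {2..n}. of_int (sign p) * (\<Prod>i\<in>{2..n}. X i (p i)))"

definition E :: "nat \<Rightarrow> nat \<Rightarrow> rpoly" where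
  "E n k = (\<Sum>S | S \<subseteq> {2..n} \<and> card S = k. \<Prod>s\<in>S. X s s)"

end

theory Submission
  imports Defs
begin


lemma ig_0: "0 \<in> ideal_gen S"
  unfolding ideal_gen_def by (rule CollectI, rule exI[of _ "{}"], auto)

lemma ig_gen: "g \<in> S \<Longrightarrow> g \<in> ideal_gen S"
  unfolding ideal_gen_def by (rule CollectI, rule exI[of _ "{g}"], rule exI[of _ "\<lambda>_. 1"], auto)

lemma ig_mult: "p \<in> ideal_gen S \<Longrightarrow> r * p \<in> ideal_gen S"
proof -
  assume "p \<in> ideal_gen S"
  then obtain F c where "finite F" "F \<subseteq> S" "p = (\<Sum>g\<in>F. c g * g)" unfolding ideal_gen_def by auto
  then show ?thesis unfolding ideal_gen_def
    by (intro CollectI exI[of _ F] exI[of _ "\<lambda>g. r * c g"]) (auto simp: sum_distrib_left mult.assoc)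
qed

lemma ig_add: "p \<in> ideal_gen S \<Longrightarrow> q \<in> ideal_gen S \<Longrightarrow> p + q \<in> ideal_gen S"
proof -
  assume "p \<in> ideal_gen S" "q \<in> ideal_gen S"
  then obtain F c G d where F: "finite F" "F \<subseteq> S" "p = (\<Sum>g\<in>F. c g * g)"
    and G: "finite G" "G \<subseteq> S" "q = (\<Sum>g\<in>G. d g * g)" unfolding ideal_gen_def by auto
  define e where "e g = (if g \<in> F then c g else 0) + (if g \<in> G then d g else 0)" for g
  have "p = (\<Sum>g\<in>F \<union> G. (if g \<in> F then c g else 0) * g)"
    unfolding F(3) by (rule sym, rule sum.mono_neutral_cong_right) (use F G in auto)
  moreover have "q = (\<Sum>g\<in>F \<union> G. (if g \<in> G then d g else 0) * g)"
    unfolding G(3) by (rule sym, rule sum.mono_neutral_cong_right) (use F G in auto)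
  ultimately have "p + q = (\<Sum>g\<in>F \<union> G. e g * g)"
    by (simp add: e_def distrib_right sum.distrib)
  then show ?thesis using F G unfolding ideal_gen_def by blast
qed

lemma ig_neg: "p \<in> ideal_gen S \<Longrightarrow> - p \<in> ideal_gen S"
  using ig_mult[of p S "-1"] by (metis mult_minus1)

lemma ig_diff: "p \<in> ideal_gen S \<Longrightarrow> q \<in> ideal_gen S \<Longrightarrow> p - q \<in> ideal_gen S"
  using ig_add[OF _ ig_neg] by (metis diff_conv_add_uminus)

lemma ig_sum: "finite A \<Longrightarrow> (\<And>x. x \<in> A \<Longrightarrow> f x \<in> ideal_gen S) \<Longrightarrow> sum f A \<in> ideal_gen S"
  by (induction A rule: finite_induct) (auto intro: ig_0 ig_add)

lemma ig_mono: "S \<subseteq> T \<Longrightarrow> ideal_gen S \<subseteq> ideal_gen T"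
  unfolding ideal_gen_def by blast

lemma C_add: "C (a + b) = C a + C b" by (simp add: C_def single_add)
lemma C_mult: "C (a * b) = C a * C b" by (simp add: C_def mult_single)
lemma C_1: "C 1 = 1" by (simp add: C_def)
lemma C_of_nat: "C (real k) = of_nat k" by (simp add: C_def)


lemma gen_sym: "i \<in> {2..n} \<Longrightarrow> j \<in> {2..n} \<Longrightarrow> X i j - X j i \<in> I n"
  unfolding I_def by (rule ig_gen) (auto simp: gens_def)

lemma gen_quad: "i \<in> {2..n} \<Longrightarrow> j \<in> {2..n} \<Longrightarrow> k \<in> {2..n} \<Longrightarrow> l \<in> {2..n} \<Longrightarrow>
   X i j * X k l + X i k * X j l + X i l * X j k \<in> I n"
  unfolding I_def gens_def
  by (rule ig_gen, rule UnI2, rule CollectI, intro exI conjI) (rule refl | assumption)+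

lemma I_mono: "n \<le> m \<Longrightarrow> I n \<subseteq> I m"
proof -
  assume nm: "n \<le> m"
  have "gens n \<subseteq> gens m" unfolding gens_def
  proof (rule Un_mono)
    show "{X i j - X j i |i j. i \<in> {2..n} \<and> j \<in> {2..n}} \<subseteq> {X i j - X j i |i j. i \<in> {2..m} \<and> j \<in> {2..m}}"
      using nm by fastforce
    show "{X i j * X k l + X i k * X j l + X i l * X j k |i j k l.
          i \<in> {2..n} \<and> j \<in> {2..n} \<and> k \<in> {2..n} \<and> l \<in> {2..n}} \<subseteq>
          {X i j * X k l + X i k * X j l + X i l * X j k |i j k l.
          i \<in> {2..m} \<and> j \<in> {2..m} \<and> k \<in> {2..m} \<and> l \<in> {2..m}}"
      using nm by fastforce
  qed
  then show ?thesis unfolding I_def by (rule ig_mono)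
qed


lemma I_mult: "p \<in> I n \<Longrightarrow> r * p \<in> I n" unfolding I_def by (rule ig_mult)
lemma I_add: "p \<in> I n \<Longrightarrow> q \<in> I n \<Longrightarrow> p + q \<in> I n" unfolding I_def by (rule ig_add)
lemma I_diff: "p \<in> I n \<Longrightarrow> q \<in> I n \<Longrightarrow> p - q \<in> I n" unfolding I_def by (rule ig_diff)
lemma I_sum: "finite A \<Longrightarrow> (\<And>x. x \<in> A \<Longrightarrow> f x \<in> I n) \<Longrightarrow> sum f A \<in> I n"
  unfolding I_def by (rule ig_sum)

lemma C3: "C (1/3) * (y + y + y) = (y::rpoly)"
proof -
  have "C (1/3) * (y + y + y) = (C (1/3) + C (1/3) + C (1/3)) * y" by (simp add: algebra_simps)
  also have "\<dots> = C 1 * y" by (simp only: C_add[symmetric]) simp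
  finally show ?thesis by (simp add: C_1)
qed

lemma C2: "C (1/2) * (y + y) = (y::rpoly)"
proof -
  have "C (1/2) * (y + y) = (C (1/2) + C (1/2)) * y" by (simp add: algebra_simps)
  also have "\<dots> = C 1 * y" by (simp only: C_add[symmetric]) simp
  finally show ?thesis by (simp add: C_1)
qed

lemma C2n [simp]: "C (1/2) * (2 * y) = (y::rpoly)"
proof -
  have "(2::rpoly) = C 2" by (simp add: C_def)
  then have "C (1/2) * (2 * y) = C (1/2 * 2) * y" by (simp only: C_mult mult.assoc)
  then show ?thesis by (simp add: C_1)
qed

lemma C3n [simp]: "C (1/3) * (3 * y) = (y::rpoly)"
proof -
  have "(3::rpoly) = C 3" by (simp add: C_def)
  then have "C (1/3) * (3 * y) = C (1/3 * 3) * y" by (simp only: C_mult mult.assoc)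
  then show ?thesis by (simp add: C_1)
qed

lemma part1: "a \<in> {2..n} \<Longrightarrow> b \<in> {2..n} \<Longrightarrow> X a a * X a b \<in> I n"
proof -
  assume a: "a \<in> {2..n}" and b: "b \<in> {2..n}"
  have "X a a * X a b = C (1/3) * (X a a * X a b + X a a * X a b + X a b * X a a)"
    by (simp add: C3 mult.commute)
  then show ?thesis using I_mult[OF gen_quad[OF a a a b]] by metis
qed

lemma part2: "a \<in> {2..n} \<Longrightarrow> b1 \<in> {2..n} \<Longrightarrow> b2 \<in> {2..n} \<Longrightarrow> b3 \<in> {2..n} \<Longrightarrow>
   X a b1 * X a b2 * X a b3 \<in> I n"
proof -
  assume a: "a \<in> {2..n}" and b: "b1 \<in> {2..n}" "b2 \<in> {2..n}" "b3 \<in> {2..n}"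
  let ?g = "X a a * X b1 b2 + X a b1 * X a b2 + X a b2 * X a b1"
  have "X a b1 * X a b2 * X a b3 = C (1/2) * (X a b3 * ?g - X b1 b2 * (X a a * X a b3))"
  proof -
    have "X a b3 * ?g - X b1 b2 * (X a a * X a b3) = X a b1 * X a b2 * X a b3 + X a b1 * X a b2 * X a b3"
      by (simp add: algebra_simps)
    then show ?thesis by (simp add: C2)
  qed
  moreover have "X a b3 * ?g - X b1 b2 * (X a a * X a b3) \<in> I n"
    using I_diff[OF I_mult[OF gen_quad[OF a a b(1,2)]] I_mult[OF part1[OF a b(3)]]] by blast
  ultimately show ?thesis using I_mult by metis
qed

lemma pair: "a \<in> {2..n} \<Longrightarrow> b \<in> {2..n} \<Longrightarrow> m \<in> {2..n} \<Longrightarrow>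
   X m b * X a m + C (1/2) * X m m * X a b \<in> I n"
proof -
  assume a: "a \<in> {2..n}" and b: "b \<in> {2..n}" and m: "m \<in> {2..n}"
  have "X m b * X a m + C (1/2) * X m m * X a b =
     C (1/2) * (X m m * X a b + X m a * X m b + X m b * X m a) + X m b * (X a m - X m a)"
  proof -
    have "C (1/2) * (X m m * X a b + X m a * X m b + X m b * X m a)
        = C (1/2) * (X m m * X a b) + C (1/2) * (X m a * X m b + X m a * X m b)"
      by (simp add: algebra_simps)
    also have "\<dots> = C (1/2) * (X m m * X a b) + X m a * X m b" by (simp add: C2)
    finally show ?thesis by (simp add: algebra_simps)
  qed
  then show ?thesis
    using I_add[OF I_mult[OF gen_quad[OF m m a b]] I_mult[OF gen_sym[OF a m]]] by metis
qed



definition D :: "nat set \<Rightarrow> rpoly" where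
  "D S = (\<Sum>p\<in>{p. p permutes S}. of_int (sign p) * (\<Prod>i\<in>S. X i (p i)))"

lemma D_insert:
  assumes fin: "finite S" and m: "m \<notin> S" and sub: "insert m S \<subseteq> {2..N}"
  shows "D (insert m S) - C (1 + real (card S) / 2) * X m m * D S \<in> I N"
proof -
  define g where "g q = of_int (sign q) * (\<Prod>i\<in>S. X i (q i))" for q :: "nat \<Rightarrow> nat"
  define f where "f p = of_int (sign p) * (\<Prod>i\<in>insert m S. X i (p i))" for p :: "nat \<Rightarrow> nat"
  let ?Q = "{q. q permutes S}"
  have finQ: "finite ?Q" using finite_permutations[OF fin] .
  have D1: "D (insert m S) = (\<Sum>b\<in>insert m S. \<Sum>q\<in>?Q. f (transpose m b \<circ> q))"
    unfolding D_def f_def by (rule sum_over_permutations_insert[OF fin m])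
  have DS: "D S = (\<Sum>q\<in>?Q. g q)" unfolding D_def g_def ..
  have fm: "f (transpose m m \<circ> q) = X m m * g q" if q: "q permutes S" for q
  proof -
    have "q m = m" using permutes_not_in[OF q m] .
    then show ?thesis unfolding f_def g_def using fin m by (simp add: prod.insert algebra_simps)
  qed
  have fb: "f (transpose m b \<circ> q) - C (1/2) * X m m * g q \<in> I N" if q: "q permutes S" and b: "b \<in> S" for q b
  proof -
    have "b \<in> q ` S" using permutes_image[OF q] b by simp
    then obtain a where a: "a \<in> S" "q a = b" by blast
    have pq: "permutation q" using fin q permutation_permutes by blast
    have sg: "sign (transpose m b \<circ> q) = - sign q"
      using sign_compose[OF permutation_swap_id pq, of m b] b m by (auto simp: sign_swap_id)
    have qS: "q i \<in> S" if "i \<in> S" for i using permutes_in_image[OF q] that by simp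
    have rest: "(\<Prod>i\<in>S - {a}. X i ((transpose m b \<circ> q) i)) = (\<Prod>i\<in>S - {a}. X i (q i))"
    proof (rule prod.cong[OF refl])
      fix i assume i: "i \<in> S - {a}"
      then have "q i \<noteq> b" using a permutes_inj[OF q] unfolding inj_def by blast
      moreover have "q i \<noteq> m" using qS[of i] i m by auto
      ultimately show "X i ((transpose m b \<circ> q) i) = X i (q i)" by (simp add: transpose_def)
    qed
    have pr: "(\<Prod>i\<in>insert m S. X i ((transpose m b \<circ> q) i)) = X m b * (X a m * (\<Prod>i\<in>S - {a}. X i (q i)))"
    proof -
      have "q m = m" using permutes_not_in[OF q m] .
      then have "(\<Prod>i\<in>insert m S. X i ((transpose m b \<circ> q) i)) = X m b * (\<Prod>i\<in>S. X i ((transpose m b \<circ> q) i))"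
        using fin m by (simp add: prod.insert)
      also have "(\<Prod>i\<in>S. X i ((transpose m b \<circ> q) i)) = X a m * (\<Prod>i\<in>S - {a}. X i ((transpose m b \<circ> q) i))"
      proof -
        have "(\<Prod>i\<in>S. X i ((transpose m b \<circ> q) i)) = X a ((transpose m b \<circ> q) a) * (\<Prod>i\<in>S - {a}. X i ((transpose m b \<circ> q) i))"
          by (rule prod.remove[OF fin a(1)])
        then show ?thesis by (simp add: a(2))
      qed
      finally show ?thesis using rest by simp
    qed
    have gq: "g q = of_int (sign q) * (X a b * (\<Prod>i\<in>S - {a}. X i (q i)))"
      unfolding g_def using prod.remove[OF fin a(1), of "\<lambda>i. X i (q i)"] a by simp
    have eq: "f (transpose m b \<circ> q) - C (1/2) * X m m * g q
       = (- of_int (sign q) * (\<Prod>i\<in>S - {a}. X i (q i))) * (X m b * X a m + C (1/2) * X m m * X a b)"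
      unfolding f_def sg pr gq by (simp add: algebra_simps)
    have Y: "X m b * X a m + C (1/2) * X m m * X a b \<in> I N"
    proof -
      have "a \<in> {2..N}" "b \<in> {2..N}" "m \<in> {2..N}" using sub a b by auto
      then show ?thesis by (rule pair)
    qed
    show ?thesis unfolding eq by (rule I_mult[OF Y])
  qed
  have CC: "C (1 + real (card S) / 2) = 1 + of_nat (card S) * C (1/2)"
    by (simp add: C_add C_1 C_mult[symmetric] C_of_nat[symmetric])
  have "D (insert m S) - C (1 + real (card S) / 2) * X m m * D S
     = (\<Sum>b\<in>S. \<Sum>q\<in>?Q. f (transpose m b \<circ> q) - C (1/2) * X m m * g q)"
  proof -
    have "D (insert m S) = (\<Sum>q\<in>?Q. X m m * g q) + (\<Sum>b\<in>S. \<Sum>q\<in>?Q. f (transpose m b \<circ> q))"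
      unfolding D1 using fin m fm by (simp add: sum.insert)
    moreover have "(\<Sum>b\<in>S. \<Sum>q\<in>?Q. f (transpose m b \<circ> q) - C (1/2) * X m m * g q)
       = (\<Sum>b\<in>S. \<Sum>q\<in>?Q. f (transpose m b \<circ> q)) - of_nat (card S) * (C (1/2) * X m m * D S)"
      unfolding DS by (simp add: sum_subtractf sum_distrib_left)
    ultimately show ?thesis unfolding CC DS by (simp add: algebra_simps sum_distrib_left)
  qed
  moreover have "(\<Sum>b\<in>S. \<Sum>q\<in>?Q. f (transpose m b \<circ> q) - C (1/2) * X m m * g q) \<in> I N"
    by (intro I_sum fin finQ) (use fb in auto)
  ultimately show ?thesis by simp
qed



lemma D_empty: "D {} = 1"
  unfolding D_def by simp

lemma det_main: "D {2..n} - C (fact n / 2 ^ (n - 1)) * (\<Prod>i\<in>{2..n}. X i i) \<in> I n"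
proof (induction n)
  case 0
  show ?case by (simp add: D_empty C_1 ig_0 I_def)
next
  case (Suc n)
  show ?case
  proof (cases "n = 0")
    case True
    then show ?thesis by (simp add: D_empty C_1 ig_0 I_def)
  next
    case False
    let ?S = "{2..n}" and ?m = "Suc n"
    have ins: "{2..Suc n} = insert ?m ?S" using False by auto
    have card: "card ?S = n - 1" by simp
    have A: "D (insert ?m ?S) - C (1 + real (card ?S) / 2) * X ?m ?m * D ?S \<in> I (Suc n)"
      by (rule D_insert) (use False in auto)
    have B: "D ?S - C (fact n / 2 ^ (n - 1)) * (\<Prod>i\<in>?S. X i i) \<in> I (Suc n)"
      using Suc.IH I_mono[of n "Suc n"] by auto
    have r: "(1 + real (card ?S) / 2) * (fact n / 2 ^ (n - 1)) = fact (Suc n) / 2 ^ (Suc n - 1)"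
    proof -
      have "real (n - 1) = real n - 1" using False by simp
      moreover have "(2::real) ^ n = 2 * 2 ^ (n - 1)" using False
        by (metis Suc_diff_1 bot_nat_0.not_eq_extremum power_Suc)
      ultimately show ?thesis by (simp add: card field_simps)
    qed
    have "D {2..Suc n} - C (fact (Suc n) / 2 ^ (Suc n - 1)) * (\<Prod>i\<in>{2..Suc n}. X i i)
       = (D (insert ?m ?S) - C (1 + real (card ?S) / 2) * X ?m ?m * D ?S)
         + (C (1 + real (card ?S) / 2) * X ?m ?m) * (D ?S - C (fact n / 2 ^ (n - 1)) * (\<Prod>i\<in>?S. X i i))"
    proof -
      have p: "(\<Prod>i\<in>{2..Suc n}. X i i) = X ?m ?m * (\<Prod>i\<in>?S. X i i)"
        unfolding ins by simp
      have c: "C (fact (Suc n) / 2 ^ (Suc n - 1)) = C (1 + real (card ?S) / 2) * C (fact n / 2 ^ (n - 1))"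
        unfolding r[symmetric] C_mult ..
      show ?thesis unfolding p c ins by (simp add: algebra_simps)
    qed
    also have "\<dots> \<in> I (Suc n)" by (rule I_add[OF A I_mult[OF B]])
    finally show ?thesis .
  qed
qed



definition Q :: "nat set \<Rightarrow> rpoly" where "Q S = (\<Prod>s\<in>S. X s s)"

lemma Q_overlap:
  assumes "finite S" "finite T" "S \<subseteq> {2..n}" "T \<subseteq> {2..n}" "S \<inter> T \<noteq> {}"
  shows "Q S * Q T \<in> I n"
proof -
  obtain a where a: "a \<in> S" "a \<in> T" using assms(5) by blast
  have "Q S = X a a * Q (S - {a})" unfolding Q_def using prod.remove[OF assms(1) a(1)] .
  moreover have "Q T = X a a * Q (T - {a})" unfolding Q_def using prod.remove[OF assms(2) a(2)] .
  ultimately have eq: "Q S * Q T = (Q (S - {a}) * Q (T - {a})) * (X a a * X a a)" by (simp add: algebra_simps)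
  have "a \<in> {2..n}" using a assms(3) by blast
  then show ?thesis unfolding eq by (intro I_mult part1)
qed

lemma comb:
  fixes A :: "nat set"
  assumes finA: "finite A"
  defines "K \<equiv> \<lambda>k. {S. S \<subseteq> A \<and> card S = k}"
  shows "(\<Sum>S\<in>K i. \<Sum>T\<in>K j. if S \<inter> T = {} then Q (S \<union> T) else 0)
       = of_nat ((i + j) choose i) * (\<Sum>U\<in>K (i + j). Q U)"
proof -
  have finK: "finite (K k)" for k unfolding K_def
    by (rule finite_subset[of _ "Pow A"]) (use finA in auto)
  define P where "P = {p \<in> K i \<times> K j. fst p \<inter> snd p = {}}"
  define Sg where "Sg = Sigma (K (i + j)) (\<lambda>U. {S. S \<subseteq> U \<and> card S = i})"
  have "(\<Sum>S\<in>K i. \<Sum>T\<in>K j. if S \<inter> T = {} then Q (S \<union> T) else 0)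
      = (\<Sum>p\<in>K i \<times> K j. if fst p \<inter> snd p = {} then Q (fst p \<union> snd p) else 0)"
    by (simp add: sum.cartesian_product split_beta)
  also have "\<dots> = (\<Sum>p\<in>P. Q (fst p \<union> snd p))"
    unfolding P_def by (rule sum.inter_filter[symmetric]) (use finK in auto)
  also have "\<dots> = (\<Sum>p\<in>Sg. Q (fst p))"
  proof (rule sum.reindex_bij_witness[where j = "\<lambda>p. (fst p \<union> snd p, fst p)" and i = "\<lambda>p. (snd p, fst p - snd p)"])
    fix p assume p: "p \<in> P"
    then show "(snd (fst p \<union> snd p, fst p), fst (fst p \<union> snd p, fst p) - snd (fst p \<union> snd p, fst p)) = p"
      unfolding P_def by (cases p) auto
    have fin: "finite (fst p)" "finite (snd p)" using p unfolding P_def K_def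
      by (auto intro: rev_finite_subset[OF finA])
    show "(fst p \<union> snd p, fst p) \<in> Sg"
      using p fin unfolding P_def Sg_def K_def by (auto simp: card_Un_disjoint)
    show "Q (fst (fst p \<union> snd p, fst p)) = Q (fst p \<union> snd p)" by simp
  next
    fix p assume p: "p \<in> Sg"
    then show "(fst (snd p, fst p - snd p) \<union> snd (snd p, fst p - snd p), fst (snd p, fst p - snd p)) = p"
      unfolding Sg_def by (cases p) auto
    have fin: "finite (fst p)" using p unfolding Sg_def K_def
      by (auto intro: rev_finite_subset[OF finA])
    have "snd p \<subseteq> fst p" using p unfolding Sg_def by auto
    then have fin2: "finite (snd p)" using fin by (rule finite_subset)
    show "(snd p, fst p - snd p) \<in> P"
      using p fin fin2 unfolding P_def Sg_def K_def by (auto simp: card_Diff_subset)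
  qed
  also have "\<dots> = (\<Sum>U\<in>K (i + j). \<Sum>S\<in>{S. S \<subseteq> U \<and> card S = i}. Q U)"
  proof -
    have "finite {S. S \<subseteq> U \<and> card S = i}" if "U \<in> K (i + j)" for U
      by (rule finite_subset[of _ "Pow U"]) (use that finA in \<open>auto simp: K_def intro: rev_finite_subset[OF finA]\<close>)
    then show ?thesis unfolding Sg_def by (intro sum.Sigma[symmetric, unfolded split_beta]) (use finK in auto)
  qed
  also have "\<dots> = (\<Sum>U\<in>K (i + j). of_nat ((i + j) choose i) * Q U)"
  proof (rule sum.cong[OF refl])
    fix U assume U: "U \<in> K (i + j)"
    then have fU: "finite U" "card U = i + j" using finA unfolding K_def by (auto intro: finite_subset)
    show "(\<Sum>S\<in>{S. S \<subseteq> U \<and> card S = i}. Q U) = of_nat ((i + j) choose i) * Q U"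
      using n_subsets[OF fU(1), of i] fU(2) by simp
  qed
  also have "\<dots> = of_nat ((i + j) choose i) * (\<Sum>U\<in>K (i + j). Q U)"
    by (simp add: sum_distrib_left)
  finally show ?thesis .
qed

lemma part3: "E n i * E n j - of_nat ((i + j) choose i) * E n (i + j) \<in> I n"
proof -
  define K where "K k = {S. S \<subseteq> {2..n} \<and> card S = k}" for k
  have EQ: "E n k = (\<Sum>S\<in>K k. Q S)" for k unfolding E_def K_def Q_def ..
  have finK: "finite (K k)" for k unfolding K_def
    by (rule finite_subset[of _ "Pow {2..n}"]) auto
  have c: "(\<Sum>S\<in>K i. \<Sum>T\<in>K j. if S \<inter> T = {} then Q (S \<union> T) else 0)
       = of_nat ((i + j) choose i) * E n (i + j)"
    unfolding EQ K_def by (rule comb) simp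
  have "E n i * E n j - of_nat ((i + j) choose i) * E n (i + j)
      = (\<Sum>S\<in>K i. \<Sum>T\<in>K j. Q S * Q T) - (\<Sum>S\<in>K i. \<Sum>T\<in>K j. if S \<inter> T = {} then Q (S \<union> T) else 0)"
    unfolding c EQ by (simp add: sum_product)
  also have "\<dots> = (\<Sum>S\<in>K i. \<Sum>T\<in>K j. Q S * Q T - (if S \<inter> T = {} then Q (S \<union> T) else 0))"
    by (simp add: sum_subtractf)
  also have "\<dots> \<in> I n"
  proof (intro I_sum finK)
    fix S T assume S: "S \<in> K i" and T: "T \<in> K j"
    have f: "finite S" "finite T" "S \<subseteq> {2..n}" "T \<subseteq> {2..n}" using S T unfolding K_def
      by (auto intro: finite_subset)
    show "Q S * Q T - (if S \<inter> T = {} then Q (S \<union> T) else 0) \<in> I n"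
    proof (cases "S \<inter> T = {}")
      case True
      then show ?thesis using f by (simp add: Q_def prod.union_disjoint I_def ig_0)
    next
      case False
      then show ?thesis using Q_overlap[OF f False] by simp
    qed
  qed
  finally show ?thesis .
qed


theorem mainTheorem14:
  fixes n :: nat
  shows "(\<forall>a\<in>{2..n}. \<forall>b\<in>{2..n}. cong_mod (X a a * X a b) 0 (I n))
       \<and> (\<forall>a\<in>{2..n}. \<forall>b1\<in>{2..n}. \<forall>b2\<in>{2..n}. \<forall>b3\<in>{2..n}.
            cong_mod (X a b1 * X a b2 * X a b3) 0 (I n))
       \<and> cong_mod (detX n) (C (fact n / 2 ^ (n - 1)) * (\<Prod>i\<in>{2..n}. X i i)) (I n)
       \<and> (\<forall>i j. cong_mod (E n i * E n j) (of_nat ((i + j) choose i) * E n (i + j)) (I n))"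
proof (intro conjI ballI allI)
  fix a b assume "a \<in> {2..n}" "b \<in> {2..n}"
  then show "cong_mod (X a a * X a b) 0 (I n)" unfolding cong_mod_def using part1 by simp
next
  fix a b1 b2 b3 assume "a \<in> {2..n}" "b1 \<in> {2..n}" "b2 \<in> {2..n}" "b3 \<in> {2..n}"
  then show "cong_mod (X a b1 * X a b2 * X a b3) 0 (I n)" unfolding cong_mod_def using part2 by simp
next
  have "detX n = D {2..n}" unfolding detX_def D_def ..
  then show "cong_mod (detX n) (C (fact n / 2 ^ (n - 1)) * (\<Prod>i\<in>{2..n}. X i i)) (I n)"
    unfolding cong_mod_def using det_main by simp
next
  fix i j
  show "cong_mod (E n i * E n j) (of_nat ((i + j) choose i) * E n (i + j)) (I n)"
    unfolding cong_mod_def by (rule part3)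
qed

end
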